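(* Let $A\in\mathfrak{B}_{n\times m}$. (a) If $X_1,X_2,\dots,X_s\in\mathcal{T}_n$ are such that $r(X_1X_2\cdots X_sA)<r(X_2X_3\cdots X_sA)<\cdots<r(X_sA)<r(A)$, then $c(X_1X_2\cdots X_sA)<c(A)$. (b) If $Y_1,Y_2,\dots,Y_t\in\mathcal{T}_m$ are such that $c(AY_1Y_2\cdots Y_t)<c(AY_2Y_3\cdots Y_t)<\cdots<c(AY_t)<c(A)$, then $r(AY_1Y_2\cdots Y_t)<r(A)$.
   Context: $\mathfrak{B}_{n\times m}$ denotes the set of all $n\times m$ matrices with entries in $\{0,1\}$. For $A=[a_{ij}]\in\mathfrak{B}_{n\times m}$, $r(A)=\langle x_1,\dots,x_n\rangle$ with $x_i=\sum_{j=1}^m a_{ij}2^{m-j}$ (row $i$ read as a binary number, first entry most significant), and $c(A)=\langle y_1,\dots,y_m\rangle$ with $y_j=\sum_{i=1}^n a_{ij}2^{n-i}$ (column $j$ read as a binary number, top entry most significant). Tuples are compared in the lexicographic order $<$. $\mathcal{T}_k$ denotes the set of $k\times k$ transposition matrices, i.e. permutation matrices which, multiplied from the left, interchange exactly two rows of a matrix, and multiplied from the right, interchange exactly two columns. *)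

theory Defs
  imports "Jordan_Normal_Form.Gauss_Jordan_Elimination"
begin

definition binary_mats :: "nat \<Rightarrow> nat \<Rightarrow> int mat set" where
  "binary_mats n m = {A. A \<in> carrier_mat n m \<and>
     (\<forall>i<n. \<forall>j<m. A $$ (i,j) \<in> {0,1})}"

definition row_code :: "int mat \<Rightarrow> int list" where
  "row_code A = map (\<lambda>i. \<Sum>j<dim_col A. A $$ (i,j) * 2 ^ (dim_col A - 1 - j)) [0..<dim_row A]"

definition col_code :: "int mat \<Rightarrow> int list" where
  "col_code A = map (\<lambda>j. \<Sum>i<dim_row A. A $$ (i,j) * 2 ^ (dim_row A - 1 - i)) [0..<dim_col A]"

definition lex_less :: "int list \<Rightarrow> int list \<Rightarrow> bool" where
  "lex_less xs ys \<longleftrightarrow> (xs, ys) \<in> lexord {(x, y). x < y}"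

definition transposition_mats :: "nat \<Rightarrow> int mat set" where
  "transposition_mats k = {swaprows_mat k a b | a b. a < k \<and> b < k \<and> a \<noteq> b}"

end

theory Submission
  imports Defs "Jordan_Normal_Form.Column_Operations"
begin

definition bval :: "(nat \<Rightarrow> int) \<Rightarrow> nat \<Rightarrow> int" where
  "bval x m = (\<Sum>j<m. x j * 2 ^ (m - 1 - j))"

definition rowsF :: "(nat \<Rightarrow> nat \<Rightarrow> int) \<Rightarrow> nat \<Rightarrow> nat \<Rightarrow> int list" where
  "rowsF f n m = map (\<lambda>i. bval (f i) m) [0..<n]"

definition colsF :: "(nat \<Rightarrow> nat \<Rightarrow> int) \<Rightarrow> nat \<Rightarrow> nat \<Rightarrow> int list" where
  "colsF f n m = map (\<lambda>j. bval (\<lambda>i. f i j) n) [0..<m]"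

definition swp :: "nat \<Rightarrow> nat \<Rightarrow> nat \<Rightarrow> nat" where
  "swp a b i = (if i = a then b else if i = b then a else i)"

lemma bval_cong: "(\<And>j. j < m \<Longrightarrow> x j = y j) \<Longrightarrow> bval x m = bval y m"
  unfolding bval_def by (rule sum.cong) auto

lemma bval_Suc: "bval x (Suc m) = 2 * bval x m + x m"
proof -
  have "(\<Sum>j<m. x j * 2 ^ (Suc m - 1 - j)) = (\<Sum>j<m. 2 * (x j * 2 ^ (m - 1 - j)))"
  proof (rule sum.cong)
    fix j assume "j \<in> {..<m}"
    then have "Suc m - 1 - j = Suc (m - 1 - j)" by auto
    then show "x j * 2 ^ (Suc m - 1 - j) = 2 * (x j * 2 ^ (m - 1 - j))" by simp
  qed simp
  then show ?thesis unfolding bval_def by (simp add: sum_distrib_left)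
qed

lemma bval_less:
  assumes bx: "\<And>j. j < m \<Longrightarrow> x j \<in> {0,1}" and by': "\<And>j. j < m \<Longrightarrow> y j \<in> {0,1}"
    and km: "k < m" and eq: "\<And>j. j < k \<Longrightarrow> x j = y j" and xk: "x k = 0" and yk: "y k = 1"
  shows "bval x m < bval y m"
  using km bx by'
proof (induction m)
  case 0 then show ?case by simp
next
  case (Suc m)
  show ?case
  proof (cases "k = m")
    case True
    have "bval x m = bval y m" using eq True by (intro bval_cong) auto
    then show ?thesis using True xk yk by (simp add: bval_Suc)
  next
    case False
    then have "k < m" using Suc.prems by auto
    then have "bval x m < bval y m" using Suc by auto
    moreover have "x m \<in> {0,1}" "y m \<in> {0,1}" using Suc.prems by auto
    ultimately show ?thesis by (auto simp: bval_Suc)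
  qed
qed

lemma core0:
  assumes bin: "\<And>i j. i < n \<Longrightarrow> j < m \<Longrightarrow> f i j \<in> {0,1}"
    and ab: "a < b" "b < n"
    and g: "\<And>i j. i < n \<Longrightarrow> j < m \<Longrightarrow> g i j = f (swp a b i) j"
    and lr: "lex_less (rowsF g n m) (rowsF f n m)"
  shows "lex_less (colsF g n m) (colsF f n m)"
proof -
  let ?R = "rowsF f n m" and ?G = "rowsF g n m"
  have len: "length ?R = n" "length ?G = n" by (auto simp: rowsF_def)
  have swpl: "swp a b i < n" if "i < n" for i using that ab by (auto simp: swp_def)
  have Gi: "?G ! i = ?R ! (swp a b i)" if "i < n" for i
    using that swpl[OF that] by (auto simp: rowsF_def g intro: bval_cong)
  have tr: "trans {(x::int, y). x < y}" by (auto simp: trans_def)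
  have irr: "\<not> lex_less xs xs" for xs unfolding lex_less_def
    by (rule lexord_irreflexive) auto
  have "bval (f b) m < bval (f a) m"
  proof -
    have ne: "bval (f a) m \<noteq> bval (f b) m"
    proof
      assume e: "bval (f a) m = bval (f b) m"
      have "?G = ?R"
      proof (rule nth_equalityI)
        show "length ?G = length ?R" using len by simp
        fix i assume "i < length ?G"
        then have i: "i < n" using len by simp
        show "?G ! i = ?R ! i" using Gi[OF i] e i ab
          by (auto simp: swp_def rowsF_def)
      qed
      then show False using lr irr by simp
    qed
    moreover have "\<not> bval (f a) m < bval (f b) m"
    proof
      assume lt: "bval (f a) m < bval (f b) m"
      have "take a ?R = take a ?G"
        by (rule nth_equalityI) (use len ab Gi in \<open>auto simp: swp_def\<close>)
      moreover have "(?R ! a, ?G ! a) \<in> {(x, y). x < y}"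
        using Gi[of a] ab lt by (auto simp: swp_def rowsF_def)
      moreover have "a < min (length ?R) (length ?G)" using len ab by simp
      ultimately have "lex_less ?R ?G" unfolding lex_less_def lexord_take_index_conv
        by blast
      then have "lex_less ?G ?G" using lr tr unfolding lex_less_def by (blast intro: lexord_trans)
      then show False using irr by simp
    qed
    ultimately show ?thesis by simp
  qed
  then have "\<exists>j<m. f a j \<noteq> f b j" using bval_cong[of m "f a" "f b"] by fastforce
  define j0 where "j0 = (LEAST j. j < m \<and> f a j \<noteq> f b j)"
  have j0: "j0 < m" "f a j0 \<noteq> f b j0"
    using LeastI_ex[OF \<open>\<exists>j<m. f a j \<noteq> f b j\<close>] unfolding j0_def by auto
  have bef: "f a j = f b j" if "j < j0" for j
    using not_less_Least[of j "\<lambda>j. j < m \<and> f a j \<noteq> f b j"] that j0 unfolding j0_def[symmetric]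
    by auto
  have vals: "f a j0 = 1 \<and> f b j0 = 0"
  proof -
    have "f a j0 \<in> {0,1}" "f b j0 \<in> {0,1}" using bin ab j0 by auto
    moreover have "\<not> (f a j0 = 0 \<and> f b j0 = 1)"
    proof
      assume h: "f a j0 = 0 \<and> f b j0 = 1"
      have "bval (f a) m < bval (f b) m"
        by (rule bval_less[of m _ _ j0]) (use bin ab j0 bef h in auto)
      then show False using \<open>bval (f b) m < bval (f a) m\<close> by simp
    qed
    ultimately show ?thesis using j0 by auto
  qed
  let ?C = "colsF f n m" and ?D = "colsF g n m"
  have lenc: "length ?C = m" "length ?D = m" by (auto simp: colsF_def)
  have "take j0 ?D = take j0 ?C"
  proof (rule nth_equalityI)
    show "length (take j0 ?D) = length (take j0 ?C)" using lenc by simp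
    fix j assume "j < length (take j0 ?D)"
    then have j: "j < j0" "j < m" using lenc j0 by auto
    have "bval (\<lambda>i. g i j) n = bval (\<lambda>i. f i j) n"
      by (rule bval_cong) (use j bef in \<open>auto simp: g swp_def\<close>)
    then show "take j0 ?D ! j = take j0 ?C ! j" using j by (simp add: colsF_def)
  qed
  moreover have "bval (\<lambda>i. g i j0) n < bval (\<lambda>i. f i j0) n"
    by (rule bval_less[of n _ _ a]) (use bin ab j0 vals swpl in \<open>auto simp: g swp_def\<close>)
  ultimately show ?thesis unfolding lex_less_def lexord_take_index_conv
    using lenc j0 by (auto simp: colsF_def)
qed
lemma core:
  assumes bin: "\<And>i j. i < n \<Longrightarrow> j < m \<Longrightarrow> f i j \<in> {0,1}"
    and ab: "a < n" "b < n" "a \<noteq> b"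
    and g: "\<And>i j. i < n \<Longrightarrow> j < m \<Longrightarrow> g i j = f (swp a b i) j"
    and lr: "lex_less (rowsF g n m) (rowsF f n m)"
  shows "lex_less (colsF g n m) (colsF f n m)"
proof (cases "a < b")
  case True then show ?thesis using core0[OF bin _ _ g lr] ab by auto
next
  case False
  have "swp a b = swp b a" by (auto simp: swp_def fun_eq_iff)
  then show ?thesis using core0[OF bin _ _ _ lr, of b a] g ab False by auto
qed

lemma row_code_eq: "row_code M = rowsF (\<lambda>i j. M $$ (i,j)) (dim_row M) (dim_col M)"
  by (simp add: row_code_def rowsF_def bval_def)
lemma col_code_eq: "col_code M = colsF (\<lambda>i j. M $$ (i,j)) (dim_row M) (dim_col M)"
  by (simp add: col_code_def colsF_def bval_def)
lemma col_code_T: "col_code M = rowsF (\<lambda>j i. M $$ (i,j)) (dim_col M) (dim_row M)"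
  by (simp add: col_code_def rowsF_def bval_def)
lemma row_code_T: "row_code M = colsF (\<lambda>j i. M $$ (i,j)) (dim_col M) (dim_row M)"
  by (simp add: row_code_def colsF_def bval_def)


lemma stepA:
  assumes C: "C \<in> binary_mats n m" and X: "X \<in> transposition_mats n"
  shows "X * C \<in> binary_mats n m \<and>
    (lex_less (row_code (X * C)) (row_code C) \<longrightarrow> lex_less (col_code (X * C)) (col_code C))"
proof -
  obtain a b where ab: "X = swaprows_mat n a b" "a < n" "b < n" "a \<noteq> b"
    using X by (auto simp: transposition_mats_def)
  have Cc: "C \<in> carrier_mat n m" using C by (simp add: binary_mats_def)
  have Cb: "\<And>i j. i < n \<Longrightarrow> j < m \<Longrightarrow> C $$ (i,j) \<in> {0,1}" using C by (simp add: binary_mats_def)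
  have XC: "X * C = swaprows a b C" using swaprows_mat[OF Cc ab(2,3)] ab(1) by simp
  have dims: "dim_row (X * C) = n" "dim_col (X * C) = m" using XC Cc by auto
  have ent: "(X * C) $$ (i,j) = C $$ (swp a b i, j)" if "i < n" "j < m" for i j
  proof -
    have "(X * C) $$ (i,j) = swaprows a b C $$ (i,j)" by (simp only: XC)
    also have "\<dots> = C $$ (swp a b i, j)" using that Cc by (simp add: swp_def)
    finally show ?thesis .
  qed
  have sl: "swp a b i < n" if "i < n" for i using that ab unfolding swp_def by auto
  have XCc: "X * C \<in> carrier_mat n m" unfolding carrier_mat_def using dims by blast
  have bin: "X * C \<in> binary_mats n m"
    unfolding binary_mats_def
  proof (intro CollectI conjI allI impI XCc)
    fix i j assume "i < n" "j < m"
    then show "(X * C) $$ (i,j) \<in> {0,1}" using ent[of i j] sl[of i] Cb[of "swp a b i" j] by simp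
  qed
  show ?thesis
  proof (intro conjI impI bin)
    assume "lex_less (row_code (X * C)) (row_code C)"
    then have hh: "lex_less (rowsF (\<lambda>i j. (X * C) $$ (i,j)) n m) (rowsF (\<lambda>i j. C $$ (i,j)) n m)"
      using dims Cc by (simp add: row_code_eq)
    have "lex_less (colsF (\<lambda>i j. (X * C) $$ (i,j)) n m) (colsF (\<lambda>i j. C $$ (i,j)) n m)"
      by (rule core[of n m "\<lambda>i j. C $$ (i,j)" a b "\<lambda>i j. (X * C) $$ (i,j)", OF Cb ab(2-4) _ hh])
         (use ent in auto)
    then show "lex_less (col_code (X * C)) (col_code C)"
      using dims Cc by (simp add: col_code_eq)
  qed
qed

lemma lex_trans: "lex_less x y \<Longrightarrow> lex_less y z \<Longrightarrow> lex_less x z"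
  unfolding lex_less_def by (erule lexord_trans) (auto simp: trans_def)

lemma partA_bin: "A \<in> binary_mats n m \<Longrightarrow> set Xs \<subseteq> transposition_mats n
   \<Longrightarrow> foldr (*) Xs A \<in> binary_mats n m"
  by (induction Xs) (auto dest: stepA)

lemma partA:
  assumes "A \<in> binary_mats n m"
  shows "Xs \<noteq> [] \<Longrightarrow> set Xs \<subseteq> transposition_mats n \<Longrightarrow>
            (\<forall>i<length Xs. lex_less (row_code (foldr (*) (drop i Xs) A))
                                     (row_code (foldr (*) (drop (Suc i) Xs) A)))
            \<Longrightarrow> lex_less (col_code (foldr (*) Xs A)) (col_code A)"
proof (induction Xs)
  case Nil then show ?case by simp
next
  case (Cons X Xs)
  let ?C = "foldr (*) Xs A"
  have Cb: "?C \<in> binary_mats n m" using partA_bin[OF assms] Cons.prems by auto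
  have "lex_less (row_code (X * ?C)) (row_code ?C)" using Cons.prems(3) by (erule_tac x=0 in allE) auto
  then have s: "lex_less (col_code (X * ?C)) (col_code ?C)" using stepA[OF Cb] Cons.prems by auto
  show ?case
  proof (cases "Xs = []")
    case True then show ?thesis using s by simp
  next
    case False
    have "\<forall>i<length Xs. lex_less (row_code (foldr (*) (drop i Xs) A))
                                     (row_code (foldr (*) (drop (Suc i) Xs) A))"
    proof (intro allI impI)
      fix i assume "i < length Xs"
      then show "lex_less (row_code (foldr (*) (drop i Xs) A)) (row_code (foldr (*) (drop (Suc i) Xs) A))"
        using Cons.prems(3) by (erule_tac x="Suc i" in allE) auto
    qed
    then have "lex_less (col_code ?C) (col_code A)" using Cons False by auto
    then show ?thesis using s by (auto intro: lex_trans)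
  qed
qed

lemma permE:
  assumes "set Zs \<subseteq> transposition_mats m"
  shows "\<exists>p. bij_betw p {..<m} {..<m} \<and> (\<forall>C \<in> carrier_mat n m. foldl (*) C Zs \<in> carrier_mat n m \<and>
      (\<forall>i<n. \<forall>j<m. foldl (*) C Zs $$ (i,j) = C $$ (i, p j)))"
  using assms
proof (induction Zs)
  case Nil
  show ?case by (intro exI[of _ "\<lambda>j. j"]) (auto simp: bij_betw_def)
next
  case (Cons Z Zs)
  obtain p where p: "bij_betw p {..<m} {..<m}" and
    P: "\<And>C. C \<in> carrier_mat n m \<Longrightarrow> foldl (*) C Zs \<in> carrier_mat n m \<and>
      (\<forall>i<n. \<forall>j<m. foldl (*) C Zs $$ (i,j) = C $$ (i, p j))"
    using Cons by auto
  obtain a b where ab: "Z = swaprows_mat m a b" "a < m" "b < m" "a \<noteq> b"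
    using Cons.prems by (auto simp: transposition_mats_def)
  have bs: "bij_betw (swp a b) {..<m} {..<m}"
    unfolding bij_betw_def inj_on_def swp_def using ab by auto
  show ?case
  proof (rule exI[of _ "swp a b \<circ> p"], rule conjI)
    show "bij_betw (swp a b \<circ> p) {..<m} {..<m}" using bij_betw_trans[OF p bs] .
  next
    show "\<forall>C \<in> carrier_mat n m. foldl (*) C (Z # Zs) \<in> carrier_mat n m \<and>
      (\<forall>i<n. \<forall>j<m. foldl (*) C (Z # Zs) $$ (i,j) = C $$ (i, (swp a b \<circ> p) j))"
    proof
    fix C :: "int mat" assume C: "C \<in> carrier_mat n m"
    have CZ: "C * Z = swapcols a b C" using swapcols_mat[OF C ab(2,3)] ab(1) by simp
    have CZc: "C * Z \<in> carrier_mat n m" using CZ C by auto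
    have pl: "p j < m" if "j < m" for j using p that by (auto simp: bij_betw_def)
    show "foldl (*) C (Z # Zs) \<in> carrier_mat n m \<and>
      (\<forall>i<n. \<forall>j<m. foldl (*) C (Z # Zs) $$ (i,j) = C $$ (i, (swp a b \<circ> p) j))"
      using P[OF CZc] CZ C pl by (auto simp: swp_def)
  qed
  qed
qed

lemma stepB:
  assumes A: "A \<in> binary_mats n m" and Y: "Y \<in> transposition_mats m"
    and Zs: "set Zs \<subseteq> transposition_mats m"
    and lt: "lex_less (col_code (foldl (*) (A * Y) Zs)) (col_code (foldl (*) A Zs))"
  shows "lex_less (row_code (foldl (*) (A * Y) Zs)) (row_code (foldl (*) A Zs))"
proof -
  obtain a b where ab: "Y = swaprows_mat m a b" "a < m" "b < m" "a \<noteq> b"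
    using Y by (auto simp: transposition_mats_def)
  have Ac: "A \<in> carrier_mat n m" using A by (auto simp: binary_mats_def)
  have AY: "A * Y = swapcols a b A" using swapcols_mat[OF Ac ab(2,3)] ab(1) by simp
  have AYc: "A * Y \<in> carrier_mat n m" using AY Ac by auto
  obtain p where p: "bij_betw p {..<m} {..<m}" and
    P: "\<And>C. C \<in> carrier_mat n m \<Longrightarrow> foldl (*) C Zs \<in> carrier_mat n m \<and>
      (\<forall>i<n. \<forall>j<m. foldl (*) C Zs $$ (i,j) = C $$ (i, p j))"
    using permE[OF Zs, of n] by auto
  define D where "D = foldl (*) A Zs"
  define E where "E = foldl (*) (A * Y) Zs"
  have Dc: "D \<in> carrier_mat n m" and Ec: "E \<in> carrier_mat n m"
    using P[OF Ac] P[OF AYc] unfolding D_def E_def by auto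
  have pl: "p j < m" if "j < m" for j using p that by (auto simp: bij_betw_def)
  have Dent: "D $$ (i,j) = A $$ (i, p j)" if "i < n" "j < m" for i j
    using P[OF Ac] that unfolding D_def by auto
  have Eent: "E $$ (i,j) = A $$ (i, swp a b (p j))" if "i < n" "j < m" for i j
    using P[OF AYc] that AY Ac pl[OF that(2)] unfolding E_def by (auto simp: swp_def)
  define q where "q = inv_into {..<m} p"
  have im: "a \<in> p ` {..<m}" "b \<in> p ` {..<m}" using p ab by (auto simp: bij_betw_def)
  have q: "q a < m" "q b < m" "p (q a) = a" "p (q b) = b"
    using inv_into_into[OF im(1)] inv_into_into[OF im(2)] f_inv_into_f[OF im(1)] f_inv_into_f[OF im(2)]
    unfolding q_def by auto
  have qab: "q a \<noteq> q b" using q ab by metis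
  have inj: "inj_on p {..<m}" using p by (auto simp: bij_betw_def)
  have key: "E $$ (i,j) = D $$ (i, swp (q a) (q b) j)" if "i < n" "j < m" for i j
  proof -
    consider "j = q a" | "j = q b" | "j \<noteq> q a" "j \<noteq> q b" by blast
    then show ?thesis
    proof cases
      case 1 then show ?thesis using Eent Dent that q by (auto simp: swp_def)
    next
      case 2 then show ?thesis using Eent Dent that q qab by (auto simp: swp_def)
    next
      case 3
      have "p j \<noteq> a" "p j \<noteq> b" using 3 q that inj by (metis inj_on_def lessThan_iff)+
      then show ?thesis using 3 Eent Dent that by (auto simp: swp_def)
    qed
  qed
  have bin: "\<And>j i. j < m \<Longrightarrow> i < n \<Longrightarrow> D $$ (i,j) \<in> {0,1}"
    using Dent A pl by (auto simp: binary_mats_def)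
  have hh: "lex_less (rowsF (\<lambda>j i. E $$ (i,j)) m n) (rowsF (\<lambda>j i. D $$ (i,j)) m n)"
    using lt Dc Ec unfolding D_def[symmetric] E_def[symmetric] by (simp add: col_code_T)
  have "lex_less (colsF (\<lambda>j i. E $$ (i,j)) m n) (colsF (\<lambda>j i. D $$ (i,j)) m n)"
    by (rule core[of m n "\<lambda>j i. D $$ (i,j)" "q a" "q b" "\<lambda>j i. E $$ (i,j)", OF bin q(1,2) qab _ hh])
       (use key in auto)
  then show ?thesis using Dc Ec unfolding D_def[symmetric] E_def[symmetric] by (simp add: row_code_T)
qed

lemma partB:
  assumes A: "A \<in> binary_mats n m"
  shows "Ys \<noteq> [] \<Longrightarrow> set Ys \<subseteq> transposition_mats m \<Longrightarrow>
            (\<forall>i<length Ys. lex_less (col_code (foldl (*) A (drop i Ys)))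
                                     (col_code (foldl (*) A (drop (Suc i) Ys))))
            \<Longrightarrow> lex_less (row_code (foldl (*) A Ys)) (row_code A)"
proof (induction Ys)
  case Nil then show ?case by simp
next
  case (Cons Y Zs)
  have "lex_less (col_code (foldl (*) (A * Y) Zs)) (col_code (foldl (*) A Zs))"
    using Cons.prems(3) by (erule_tac x=0 in allE) auto
  then have s: "lex_less (row_code (foldl (*) (A * Y) Zs)) (row_code (foldl (*) A Zs))"
    using stepB[OF A] Cons.prems by auto
  show ?case
  proof (cases "Zs = []")
    case True then show ?thesis using s by simp
  next
    case False
    have "\<forall>i<length Zs. lex_less (col_code (foldl (*) A (drop i Zs)))
                                     (col_code (foldl (*) A (drop (Suc i) Zs)))"
    proof (intro allI impI)
      fix i assume "i < length Zs"
      then show "lex_less (col_code (foldl (*) A (drop i Zs))) (col_code (foldl (*) A (drop (Suc i) Zs)))"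
        using Cons.prems(3) by (erule_tac x="Suc i" in allE) auto
    qed
    then have "lex_less (row_code (foldl (*) A Zs)) (row_code A)" using Cons False by auto
    then show ?thesis using s by (auto intro: lex_trans)
  qed
qed

theorem theorem1:
  fixes A :: "int mat" and n m :: nat
  assumes "A \<in> binary_mats n m"
  shows "(\<forall>Xs. Xs \<noteq> [] \<and> set Xs \<subseteq> transposition_mats n \<and>
            (\<forall>i<length Xs. lex_less (row_code (foldr (*) (drop i Xs) A))
                                     (row_code (foldr (*) (drop (Suc i) Xs) A)))
            \<longrightarrow> lex_less (col_code (foldr (*) Xs A)) (col_code A))
       \<and> (\<forall>Ys. Ys \<noteq> [] \<and> set Ys \<subseteq> transposition_mats m \<and>
            (\<forall>i<length Ys. lex_less (col_code (foldl (*) A (drop i Ys)))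
                                     (col_code (foldl (*) A (drop (Suc i) Ys))))
            \<longrightarrow> lex_less (row_code (foldl (*) A Ys)) (row_code A))"
  using partA[OF assms] partB[OF assms] by blast

end
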